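(* Let $C$ be a bounded subset of a Banach space and let $\mathcal S$ be a semigroup (under composition) of self-mappings of $C$ generated by a family of firmly nonexpansive mappings $C\to C$. Suppose $\mathcal S$ is subsurjective, i.e. there is a nonempty set $D\subset C$ with $T(D)=D$ for every $T\in\mathcal S$. Then $\mathcal S$ has a common fixed point in $C$.
   Context: A mapping $T:C\to C$ is firmly nonexpansive if $\|Tx-Ty\|\le \|\alpha(x-y)+(1-\alpha)(Tx-Ty)\|$ for all $x,y\in C$ and all $\alpha\in(0,1)$. *)

theory Defs
  imports "HOL-Analysis.Analysis"
begin

definition firmly_nonexpansive_on :: "'a::real_normed_vector set \<Rightarrow> ('a \<Rightarrow> 'a) \<Rightarrow> bool" where
  "firmly_nonexpansive_on C T \<longleftrightarrow>
     (\<forall>x\<in>C. \<forall>y\<in>C. \<forall>\<alpha>::real. 0 < \<alpha> \<and> \<alpha> < 1 \<longrightarrow>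
        norm (T x - T y) \<le> norm (\<alpha> *\<^sub>R (x - y) + (1 - \<alpha>) *\<^sub>R (T x - T y)))"

inductive_set gen_semigroup :: "('a \<Rightarrow> 'a) set \<Rightarrow> ('a \<Rightarrow> 'a) set" for F where
  gen: "T \<in> F \<Longrightarrow> T \<in> gen_semigroup F"
| comp: "T \<in> gen_semigroup F \<Longrightarrow> U \<in> gen_semigroup F \<Longrightarrow> T \<circ> U \<in> gen_semigroup F"

end

theory Submission
  imports Defs
begin

lemma key:
  fixes D C :: "'a::real_normed_vector set"
  assumes bD: "bounded D" and DC: "D \<subseteq> C" and fn: "firmly_nonexpansive_on C T"
    and TD: "T ` D = D" and z: "z \<in> D"
  shows "T z = z"
proof -
  define g where "g = (\<lambda>y. SOME x. x \<in> D \<and> T x = y)"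
  have g: "g y \<in> D \<and> T (g y) = y" if "y \<in> D" for y
  proof -
    have "\<exists>x. x \<in> D \<and> T x = y" using that TD by (metis imageE)
    then show ?thesis unfolding g_def by (rule someI_ex)
  qed
  have gD: "(g^^n) y \<in> D" if "y \<in> D" for n y
    using that by (induction n) (auto simp: g)
  obtain B where B: "\<forall>x\<in>D. norm x \<le> B" using bD bounded_iff by auto
  define M where "M k = Sup ((\<lambda>y. norm ((g^^k) y - y)) ` D)" for k
  have bdd: "bdd_above ((\<lambda>y. norm ((g^^k) y - y)) ` D)" for k
  proof (rule bdd_aboveI2)
    fix y assume "y \<in> D"
    then have "norm ((g^^k) y) \<le> B" "norm y \<le> B" using B gD by auto
    then show "norm ((g^^k) y - y) \<le> 2*B" using norm_triangle_ineq4[of "(g^^k) y" y] by linarith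
  qed
  have Mup: "norm ((g^^k) y - y) \<le> M k" if "y \<in> D" for k y
    unfolding M_def by (rule cSup_upper) (use that bdd in auto)
  have Mle: "M k \<le> 2*B" for k
    unfolding M_def
  proof (rule cSup_least)
    show "(\<lambda>y. norm ((g ^^ k) y - y)) ` D \<noteq> {}" using z by auto
  next
    fix x assume "x \<in> (\<lambda>y. norm ((g ^^ k) y - y)) ` D"
    then obtain y where y: "y \<in> D" "x = norm ((g ^^ k) y - y)" by auto
    then have "norm ((g^^k) y) \<le> B" "norm y \<le> B" using B gD by auto
    then show "x \<le> 2*B" using y norm_triangle_ineq4[of "(g^^k) y" y] by linarith
  qed
  have M0: "M 0 = 0"
  proof -
    have "(\<lambda>y. norm ((g ^^ 0) y - y)) ` D = {0}" using z by auto
    then show ?thesis unfolding M_def by simp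
  qed
  have conv: "2 * M (Suc k) \<le> M k + M (Suc (Suc k))" for k
  proof -
    have "M (Suc k) \<le> (M k + M (Suc (Suc k))) / 2"
      unfolding M_def[of "Suc k"]
    proof (rule cSup_least)
      show "(\<lambda>y. norm ((g ^^ Suc k) y - y)) ` D \<noteq> {}" using z by auto
    next
      fix r assume "r \<in> (\<lambda>y. norm ((g ^^ Suc k) y - y)) ` D"
      then obtain y where y: "y \<in> D" "r = norm ((g ^^ Suc k) y - y)" by auto
      define x where "x = (g^^Suc (Suc k)) y"
      define w where "w = g y"
      have xD: "x \<in> D" unfolding x_def using gD[OF y(1), of "Suc (Suc k)"] by simp
      have wD: "w \<in> D" unfolding w_def using g y by auto
      have Tx: "T x = (g^^Suc k) y" unfolding x_def using g gD y by auto
      have Tw: "T w = y" unfolding w_def using g y by auto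
      have gw: "(g^^k) w = (g^^Suc k) y" unfolding w_def by (simp add: funpow_swap1)
      have "norm (T x - T w) \<le> norm ((1/2) *\<^sub>R (x - w) + (1 - 1/2) *\<^sub>R (T x - T w))"
        proof -
        have "\<forall>x\<in>C. \<forall>y\<in>C. \<forall>\<alpha>::real. 0 < \<alpha> \<and> \<alpha> < 1 \<longrightarrow>
          norm (T x - T y) \<le> norm (\<alpha> *\<^sub>R (x - y) + (1 - \<alpha>) *\<^sub>R (T x - T y))"
          using fn unfolding firmly_nonexpansive_on_def by blast
        moreover have "x \<in> C" "w \<in> C" using xD wD DC by auto
        ultimately have "0 < (1/2::real) \<and> (1/2::real) < 1 \<longrightarrow>
          norm (T x - T w) \<le> norm ((1/2::real) *\<^sub>R (x - w) + (1 - 1/2) *\<^sub>R (T x - T w))" by blast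
        then show ?thesis by simp
      qed
      also have "(1/2) *\<^sub>R (x - w) + (1 - 1/2) *\<^sub>R (T x - T w)
          = (1/2) *\<^sub>R ((x - y) + ((g^^k) w - w))"
        unfolding Tx Tw gw by (simp add: algebra_simps)
      also have "norm \<dots> = (1/2) * norm ((x - y) + ((g^^k) w - w))" by simp
      also have "\<dots> \<le> (1/2) * (norm (x - y) + norm ((g^^k) w - w))"
        by (intro mult_left_mono norm_triangle_ineq) auto
      also have "\<dots> \<le> (1/2) * (M (Suc (Suc k)) + M k)"
        using Mup[OF y(1), of "Suc (Suc k)"] Mup[OF wD, of k] unfolding x_def by auto
      finally show "r \<le> (M k + M (Suc (Suc k))) / 2" using y Tx Tw by simp
    qed
    then show ?thesis by simp
  qed
  have lin: "M (Suc k) - M k \<ge> M 1" for k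
  proof (induction k)
    case 0 then show ?case using M0 by simp
  next
    case (Suc k) then show ?case using conv[of k] by linarith
  qed
  have kM: "M k \<ge> real k * M 1" for k
  proof (induction k)
    case 0 then show ?case using M0 by simp
  next
    case (Suc k) then show ?case using lin[of k] by (simp add: algebra_simps)
  qed
  have M1pos: "M 1 \<ge> 0" using Mup[OF z, of 1] norm_ge_zero[of "(g ^^ 1) z - z"] by linarith
  have M1: "M 1 = 0"
  proof (rule ccontr)
    assume "M 1 \<noteq> 0"
    then have p: "M 1 > 0" using M1pos by simp
    obtain n :: nat where n: "real n > 2*B / M 1" using reals_Archimedean2 by blast
    then have "real n * M 1 > 2*B" using p by (simp add: field_simps)
    then show False using kM[of n] Mle[of n] by linarith
  qed
  have "norm (g z - z) \<le> 0" using Mup[OF z, of 1] M1 by simp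
  then have "g z = z" by simp
  then show "T z = z" using g[OF z] by metis
qed

theorem corollary3p11:
  fixes C :: "'a::banach set" and F :: "('a \<Rightarrow> 'a) set"
  assumes "bounded C"
    and "\<forall>T\<in>F. T ` C \<subseteq> C \<and> firmly_nonexpansive_on C T"
    and "\<exists>D. D \<noteq> {} \<and> D \<subseteq> C \<and> (\<forall>T\<in>gen_semigroup F. T ` D = D)"
  shows "\<exists>x\<in>C. \<forall>T\<in>gen_semigroup F. T x = x"
proof -
  obtain D where D: "D \<noteq> {}" "D \<subseteq> C" "\<forall>T\<in>gen_semigroup F. T ` D = D" using assms(3) by blast
  have bD: "bounded D" using assms(1) D(2) bounded_subset by blast
  have "\<forall>z\<in>D. T z = z" if "T \<in> gen_semigroup F" for T
    using that
  proof (induction rule: gen_semigroup.induct)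
    case (gen T)
    then show ?case using key[OF bD D(2)] assms(2) D(3) gen_semigroup.gen by blast
  next
    case (comp T U)
    then show ?case by auto
  qed
  moreover obtain z where "z \<in> D" using D(1) by blast
  ultimately show ?thesis using D(2) by blast
qed

end
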